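(* For any simply laced Dynkin diagram with $r$ vertices (not necessarily connected), every multipath in it has total length at most $r(r+1)/2$, and equality can occur only if the diagram is of type $A_r$.
   Context: A simple path in a Dynkin diagram is a sequence of distinct vertices, consecutive ones joined by an edge; its length is the number of its vertices. Given distinct vertices $i_1,\ldots,i_k$ and positive integers $m_1,\ldots,m_k$, a multipath with beginnings $i_1,\ldots,i_k$ and lengths $m_1,\ldots,m_k$ is a sequence of simple paths $(j_{p,1},\ldots,j_{p,m_p})$, $p=1,\ldots,k$, with $j_{p,1}=i_p$, such that for $p<p'$ the vertex $i_p$ does not occur in $(j_{p',1},\ldots,j_{p',m_{p'}})$. Its total length is $m_1+\cdots+m_k$. *)

theory Defs
  imports Main
begin

datatype dynkin_type = TypeA nat | TypeD nat | TypeE nat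

fun dt_size :: "dynkin_type \<Rightarrow> nat" where
  "dt_size (TypeA n) = n" | "dt_size (TypeD n) = n" | "dt_size (TypeE n) = n"

fun dt_valid :: "dynkin_type \<Rightarrow> bool" where
  "dt_valid (TypeA n) = (n \<ge> 1)"
| "dt_valid (TypeD n) = (n \<ge> 4)"
| "dt_valid (TypeE n) = (n \<in> {6,7,8})"

text \<open>Directed "generating" edges: A_n is the path 0-1-...-(n-1);
D_n is the path 0-...-(n-2) plus the edge (n-3)-(n-1);
E_n is the path 0-...-(n-2) plus the edge 2-(n-1).\<close>
fun dt_edge0 :: "dynkin_type \<Rightarrow> nat \<Rightarrow> nat \<Rightarrow> bool" where
  "dt_edge0 (TypeA n) i j = (j = i + 1 \<and> j < n)"
| "dt_edge0 (TypeD n) i j = ((j = i + 1 \<and> j < n - 1) \<or> (i = n - 3 \<and> j = n - 1))"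
| "dt_edge0 (TypeE n) i j = ((j = i + 1 \<and> j < n - 1) \<or> (i = 2 \<and> j = n - 1))"

definition dt_adj :: "dynkin_type \<Rightarrow> nat \<Rightarrow> nat \<Rightarrow> bool" where
  "dt_adj t i j = (dt_edge0 t i j \<or> dt_edge0 t j i)"

definition iso_to_type :: "'a set \<Rightarrow> ('a \<Rightarrow> 'a \<Rightarrow> bool) \<Rightarrow> dynkin_type \<Rightarrow> bool" where
  "iso_to_type C E t = (\<exists>f. bij_betw f C {0..<dt_size t} \<and>
      (\<forall>x\<in>C. \<forall>y\<in>C. E x y \<longleftrightarrow> dt_adj t (f x) (f y)))"

definition component :: "'a set \<Rightarrow> ('a \<Rightarrow> 'a \<Rightarrow> bool) \<Rightarrow> 'a \<Rightarrow> 'a set" where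
  "component V E x = {y. (\<lambda>u v. u \<in> V \<and> v \<in> V \<and> E u v)\<^sup>*\<^sup>* x y}"

definition simply_laced_dynkin :: "'a set \<Rightarrow> ('a \<Rightarrow> 'a \<Rightarrow> bool) \<Rightarrow> bool" where
  "simply_laced_dynkin V E = (finite V \<and> (\<forall>x y. E x y \<longrightarrow> x \<in> V \<and> y \<in> V) \<and>
     (\<forall>x\<in>V. \<exists>t. dt_valid t \<and> iso_to_type (component V E x) E t))"

definition simple_path :: "'a set \<Rightarrow> ('a \<Rightarrow> 'a \<Rightarrow> bool) \<Rightarrow> 'a list \<Rightarrow> bool" where
  "simple_path V E p = (p \<noteq> [] \<and> distinct p \<and> set p \<subseteq> V \<and>
     (\<forall>i. Suc i < length p \<longrightarrow> E (p ! i) (p ! Suc i)))"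

definition multipath :: "'a set \<Rightarrow> ('a \<Rightarrow> 'a \<Rightarrow> bool) \<Rightarrow> 'a list list \<Rightarrow> bool" where
  "multipath V E ps = ((\<forall>p\<in>set ps. simple_path V E p) \<and> distinct (map hd ps) \<and>
     (\<forall>p p'. p < p' \<and> p' < length ps \<longrightarrow> hd (ps ! p) \<notin> set (ps ! p')))"

definition total_length :: "'a list list \<Rightarrow> nat" where
  "total_length ps = sum_list (map length ps)"

end

theory Submission
  imports Defs
begin

lemma edge0_lt: "dt_valid t \<Longrightarrow> dt_edge0 t i j \<Longrightarrow> i < j"
  by (cases t) auto

lemma edge0_par: "dt_valid t \<Longrightarrow> dt_edge0 t i j \<Longrightarrow> dt_edge0 t i' j \<Longrightarrow> i = i'"
  by (cases t) auto

lemma adj_sym: "dt_adj t i j = dt_adj t j i" unfolding dt_adj_def by auto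

lemma adj_irrefl: "dt_valid t \<Longrightarrow> \<not> dt_adj t i i"
  unfolding dt_adj_def using edge0_lt by blast

lemma adj_par: "dt_valid t \<Longrightarrow> dt_adj t x m \<Longrightarrow> dt_adj t y m \<Longrightarrow> x < m \<Longrightarrow> y < m \<Longrightarrow> x = y"
  unfolding dt_adj_def using edge0_lt edge0_par by (meson not_less_iff_gr_or_eq)

lemma chord:
  fixes w :: "nat \<Rightarrow> nat"
  assumes v: "dt_valid t" and inj: "inj_on w {a..b}" and ab: "a + 2 \<le> b"
    and path: "\<And>k. a \<le> k \<Longrightarrow> k < b \<Longrightarrow> dt_adj t (w k) (w (Suc k))"
    and ch: "dt_adj t (w a) (w b)"
  shows False
proof -
  obtain m where m: "m \<in> {a..b}" and mx: "\<forall>j\<in>{a..b}. w j \<le> w m"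
  proof -
    have "finite (w ` {a..b})" "w ` {a..b} \<noteq> {}" using ab by auto
    then have "Max (w ` {a..b}) \<in> w ` {a..b}" by (rule Max_in)
    then obtain m where "m \<in> {a..b}" "w m = Max (w ` {a..b})" by auto
    then show ?thesis using that by auto
  qed
  have lt: "\<And>j. j \<in> {a..b} \<Longrightarrow> j \<noteq> m \<Longrightarrow> w j < w m"
    using mx inj m by (metis inj_on_eq_iff order_le_less)
  show False
  proof (cases "m = a")
    case True
    have "w (Suc a) = w b"
      using adj_par[OF v, of "w (Suc a)" "w m" "w b"] path[of a] ch lt[of "Suc a"] lt[of b] True ab
      by (auto simp: adj_sym)
    moreover have "Suc a \<in> {a..b}" "b \<in> {a..b}" using ab by auto
    ultimately have "Suc a = b" using inj by (simp add: inj_on_eq_iff)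
    then show False using ab by simp
  next
    case na: False
    show False
    proof (cases "m = b")
      case True
      have "w (b - 1) = w a"
        using adj_par[OF v, of "w (b-1)" "w m" "w a"] path[of "b-1"] ch lt[of "b-1"] lt[of a] True ab
        by (auto simp: adj_sym)
      moreover have "b - 1 \<in> {a..b}" "a \<in> {a..b}" using ab by auto
      ultimately have "b - 1 = a" using inj by (simp add: inj_on_eq_iff)
      then show False using ab by simp
    next
      case nb: False
      have sm: "Suc (m - 1) = m" using na m by auto
      have i1: "a \<le> m - 1" "m - 1 < b" "m - 1 \<in> {a..b}" "m - 1 \<noteq> m" "Suc m \<in> {a..b}" "Suc m \<noteq> m" "a \<le> m" "m < b"
        using na nb m by auto
      have e1: "dt_adj t (w (m-1)) (w m)" using path[OF i1(1,2)] sm by simp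
      have e2: "dt_adj t (w (Suc m)) (w m)" using path[OF i1(7,8)] by (simp add: adj_sym)
      have "w (m - 1) = w (Suc m)"
        using adj_par[OF v e1 e2 lt[OF i1(3,4)] lt[OF i1(5,6)]] .
      moreover have "m - 1 \<in> {a..b}" "Suc m \<in> {a..b}" using na nb m by auto
      ultimately have "m - 1 = Suc m" using inj by (simp add: inj_on_eq_iff)
      then show False by simp
    qed
  qed
qed

lemma S_double: "2 * (\<Sum>q<r. (r::nat) - q) = r * (r + 1)"
proof (induction r)
  case 0 then show ?case by simp
next
  case (Suc r)
  have "(\<Sum>q<Suc r. Suc r - q) = Suc r + (\<Sum>q<r. r - q)"
    by (subst sum.lessThan_Suc_shift) simp
  then show ?case using Suc by (simp add: algebra_simps)
qed

lemma sum_bound: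
  fixes l :: "nat \<Rightarrow> nat"
  assumes "k \<le> r" "\<And>q. q < k \<Longrightarrow> l q + q \<le> r"
  shows "(\<Sum>q<k. l q) \<le> (\<Sum>q<r. r - q)"
proof -
  have "(\<Sum>q<k. l q) \<le> (\<Sum>q<k. r - q)" using assms(2) by (intro sum_mono) force
  also have "\<dots> \<le> (\<Sum>q<r. r - q)" using assms(1) by (intro sum_mono2) auto
  finally show ?thesis .
qed

lemma sum_eq_first:
  fixes l :: "nat \<Rightarrow> nat"
  assumes "k \<le> r" "\<And>q. q < k \<Longrightarrow> l q + q \<le> r" "(\<Sum>q<k. l q) = (\<Sum>q<r. r - q)" "r \<ge> 1"
  shows "k \<ge> 1 \<and> l 0 = r"
proof -
  have k: "k \<noteq> 0"
  proof
    assume "k = 0"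
    then have "(\<Sum>q<k. l q) = 0" by simp
    moreover have "(\<Sum>q<r. r - q) \<ge> r - 0" using member_le_sum[of 0 "{..<r}" "\<lambda>q. r - q"] assms(4) by auto
    ultimately show False using assms(3,4) by linarith
  qed
  then obtain k' where k': "k = Suc k'" by (cases k) auto
  obtain r' where r': "r = Suc r'" using assms(4) by (cases r) auto
  have "(\<Sum>q<k. l q) = l 0 + (\<Sum>q<k'. l (Suc q))" unfolding k' by (subst sum.lessThan_Suc_shift) simp
  also have "(\<Sum>q<k'. l (Suc q)) \<le> (\<Sum>q<r'. r' - q)"
    using assms(1,2) unfolding k' r' by (intro sum_bound) force+
  finally have A: "(\<Sum>q<k. l q) \<le> l 0 + (\<Sum>q<r'. r' - q)" by simp
  have B: "(\<Sum>q<r. r - q) = r + (\<Sum>q<r'. r' - q)" unfolding r' by (subst sum.lessThan_Suc_shift) simp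
  have "l 0 \<le> r" using assms(2)[of 0] k by simp
  then show ?thesis using A B assms(3) k by simp
qed

theorem mainTheorem6:
  fixes V :: "'a set" and E :: "'a \<Rightarrow> 'a \<Rightarrow> bool" and ps :: "'a list list"
  assumes "simply_laced_dynkin V E"
    and "multipath V E ps"
  shows "total_length ps \<le> card V * (card V + 1) div 2 \<and>
         (total_length ps = card V * (card V + 1) div 2 \<longrightarrow> iso_to_type V E (TypeA (card V)))"
proof -
  define r where "r = card V"
  have fin: "finite V" and Ein: "\<And>x y. E x y \<Longrightarrow> x \<in> V \<and> y \<in> V"
    and comp: "\<And>x. x\<in>V \<Longrightarrow> \<exists>t. dt_valid t \<and> iso_to_type (component V E x) E t"
    using assms(1) unfolding simply_laced_dynkin_def by auto
  have sp: "\<And>q. q < length ps \<Longrightarrow> simple_path V E (ps!q)" using assms(2) by (auto simp: multipath_def)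
  have dh: "distinct (map hd ps)" using assms(2) by (auto simp: multipath_def)
  have avoid: "\<And>p p'. p < p' \<Longrightarrow> p' < length ps \<Longrightarrow> hd (ps!p) \<notin> set (ps!p')"
    using assms(2) by (auto simp: multipath_def)
  have len: "length (ps!q) + q \<le> r" if q: "q < length ps" for q
  proof -
    define H where "H = (\<lambda>i. hd (ps!i)) ` {..<q}"
    have "inj_on (\<lambda>i. hd (ps!i)) {..<q}" using dh q by (auto simp: inj_on_def distinct_conv_nth) (metis less_trans)
    hence cH: "card H = q" unfolding H_def by (simp add: card_image)
    have HV: "H \<subseteq> V"
    proof
      fix x assume "x \<in> H"
      then obtain i where i: "i < q" "x = hd (ps!i)" unfolding H_def by auto
      have "simple_path V E (ps!i)" using sp i q by simp
      then show "x \<in> V" using i unfolding simple_path_def by (auto intro: hd_in_set)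
    qed
    have spq: "simple_path V E (ps!q)" using sp q by simp
    have "set (ps!q) \<subseteq> V - H" using spq avoid q unfolding simple_path_def H_def by auto
    then have "card (set (ps!q)) \<le> card (V - H)" using fin by (intro card_mono) auto
    also have "card (V - H) = r - q" using card_Diff_subset[OF finite_subset[OF HV fin] HV] cH r_def by simp
    finally have "length (ps!q) \<le> r - q" using spq unfolding simple_path_def by (simp add: distinct_card)
    moreover have "q \<le> r" using card_mono[OF fin HV] cH r_def by simp
    ultimately show ?thesis by simp
  qed
  have kr: "length ps \<le> r"
  proof (cases "length ps")
    case 0 then show ?thesis by simp
  next
    case (Suc k')
    have "simple_path V E (ps!k')" using sp Suc by simp
    then have "length (ps!k') \<ge> 1" unfolding simple_path_def by (cases "ps!k'") auto
    then show ?thesis using len[of k'] Suc by simp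
  qed
  have tot: "total_length ps = (\<Sum>q<length ps. length (ps!q))"
    unfolding total_length_def by (simp add: sum_list_sum_nth atLeast0LessThan)
  have half: "r * (r + 1) div 2 = (\<Sum>q<r. r - q)" using S_double[of r] by simp
  have part1: "total_length ps \<le> r * (r + 1) div 2"
    unfolding tot half using kr len by (intro sum_bound) auto
  have part2: "iso_to_type V E (TypeA r)" if eq: "total_length ps = r * (r + 1) div 2"
  proof (cases "r = 0")
    case True
    then have "V = {}" using fin r_def by simp
    then show ?thesis unfolding iso_to_type_def using True by (auto simp: bij_betw_def)
  next
    case False
    have "length ps \<ge> 1 \<and> length (ps!0) = r"
      using sum_eq_first[of "length ps" r "\<lambda>q. length (ps!q)"] kr len eq False unfolding tot half by auto
    then have ps0: "0 < length ps" and lp: "length (ps!0) = r" by auto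
    define p where "p = ps!0"
    have spp: "simple_path V E p" using sp ps0 p_def by simp
    have lp': "length p = r" using lp p_def by simp
    have dp: "distinct p" and pV: "set p \<subseteq> V" and pE: "\<And>i. Suc i < r \<Longrightarrow> E (p!i) (p!Suc i)"
      using spp lp' unfolding simple_path_def by auto
    have setp: "set p = V" using card_subset_eq[OF fin pV] dp lp' r_def by (simp add: distinct_card)
    have sym: "E y x" if "E x y" for x y
    proof -
      have xV: "x \<in> V" and yV: "y \<in> V" using Ein that by auto
      obtain t where "dt_valid t" and "iso_to_type (component V E x) E t" using comp xV by blast
      then obtain f where iso: "\<forall>u\<in>component V E x. \<forall>v\<in>component V E x. E u v \<longleftrightarrow> dt_adj t (f u) (f v)"
        unfolding iso_to_type_def by blast
      have "x \<in> component V E x" unfolding component_def by simp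
      moreover have "y \<in> component V E x" unfolding component_def using xV yV that
        by (simp add: r_into_rtranclp)
      ultimately show ?thesis using iso that adj_sym by metis
    qed
    obtain t where vt: "dt_valid t" and iC: "iso_to_type (component V E (p!0)) E t"
      using comp pV lp' False by (metis nth_mem neq0_conv subsetD)
    then obtain f where fC: "bij_betw f (component V E (p!0)) {0..<dt_size t}"
      and iso: "\<forall>u\<in>component V E (p!0). \<forall>v\<in>component V E (p!0). E u v \<longleftrightarrow> dt_adj t (f u) (f v)"
      unfolding iso_to_type_def by blast
    have inC: "k < r \<Longrightarrow> p!k \<in> component V E (p!0)" for k
    proof (induction k)
      case 0 then show ?case unfolding component_def by simp
    next
      case (Suc k)
      have "E (p!k) (p!Suc k)" using pE Suc by simp
      moreover have "p!k \<in> V" "p!Suc k \<in> V" using pV Suc lp' by auto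
      ultimately show ?case using Suc unfolding component_def
        by (auto intro: rtranclp.rtrancl_into_rtrancl)
    qed
    define w where "w k = f (p!k)" for k
    have injw: "inj_on w {0..<r}"
    proof (rule inj_onI)
      fix i j assume i: "i \<in> {0..<r}" and j: "j \<in> {0..<r}" and "w i = w j"
      then have "p!i = p!j" using fC inC unfolding w_def bij_betw_def inj_on_def by auto
      then show "i = j" using dp i j lp' by (simp add: nth_eq_iff_index_eq)
    qed
    have key: "E (p!i) (p!j) \<longleftrightarrow> (j = Suc i \<or> i = Suc j)" if i: "i < r" and j: "j < r" for i j
    proof
      assume "j = Suc i \<or> i = Suc j"
      then show "E (p!i) (p!j)" using pE sym i j by auto
    next
      have noch: False if ij: "i < j" "j < r" "i + 2 \<le> j" "E (p!i) (p!j)" for i j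
      proof (rule chord[OF vt, of w i j])
        show "inj_on w {i..j}" by (rule inj_on_subset[OF injw]) (use ij in auto)
        show "i + 2 \<le> j" by fact
        show "dt_adj t (w k) (w (Suc k))" if "i \<le> k" "k < j" for k
          using iso inC pE ij that unfolding w_def by auto
        show "dt_adj t (w i) (w j)" using iso inC ij unfolding w_def by auto
      qed
      assume E: "E (p!i) (p!j)"
      have "i \<noteq> j" using E iso inC adj_irrefl[OF vt] i unfolding w_def by auto
      show "j = Suc i \<or> i = Suc j"
      proof (cases "i < j")
        case True
        then have "\<not> i + 2 \<le> j" using noch[of i j] E j by blast
        then show ?thesis using True by simp
      next
        case False
        have "E (p!j) (p!i)" using sym E by blast
        then have "\<not> j + 2 \<le> i" using noch[of j i] False \<open>i \<noteq> j\<close> i by auto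
        then show ?thesis using False \<open>i \<noteq> j\<close> by simp
      qed
    qed
    define g where "g = inv_into {..<r} ((!) p)"
    have bp: "bij_betw ((!) p) {..<r} V" using bij_betw_nth[OF dp] lp' setp by simp
    have bg: "bij_betw g V {0..<r}" unfolding g_def using bij_betw_inv_into[OF bp] by (simp add: atLeast0LessThan)
    have pg: "p ! (g x) = x" if "x \<in> V" for x
      unfolding g_def using bp that by (simp add: bij_betw_def f_inv_into_f)
    have gr: "g x < r" if "x \<in> V" for x using bg that by (auto simp: bij_betw_def)
    show ?thesis unfolding iso_to_type_def
    proof (intro exI conjI ballI)
      show "bij_betw g V {0..<dt_size (TypeA r)}" using bg by simp
      fix x y assume x: "x \<in> V" and y: "y \<in> V"
      have "E x y \<longleftrightarrow> E (p!(g x)) (p!(g y))" using pg x y by simp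
      also have "\<dots> \<longleftrightarrow> (g y = Suc (g x) \<or> g x = Suc (g y))" using key gr x y by blast
      also have "\<dots> \<longleftrightarrow> dt_adj (TypeA r) (g x) (g y)" using gr x y by (auto simp: dt_adj_def)
      finally show "E x y \<longleftrightarrow> dt_adj (TypeA r) (g x) (g y)" .
    qed
  qed
  show ?thesis using part1 part2 r_def by simp
qed
end
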